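(* Let $r\ge 1$ and let $G$ be a simple $r$-regular graph that has a perfect $K_{1,r}$-packing, i.e. a spanning subgraph each of whose connected components is isomorphic to the star $K_{1,r}$. Then $-1$ is an eigenvalue of the adjacency matrix of $G$. *)

theory Defs
  imports "Jordan_Normal_Form.Char_Poly"
begin

definition simple_graph :: "nat \<Rightarrow> (nat \<Rightarrow> nat \<Rightarrow> bool) \<Rightarrow> bool" where
  "simple_graph n E \<longleftrightarrow>
     (\<forall>u v. E u v \<longrightarrow> u < n \<and> v < n) \<and>
     (\<forall>u v. E u v \<longrightarrow> E v u) \<and>
     (\<forall>v. \<not> E v v)"

definition regular_graph :: "nat \<Rightarrow> (nat \<Rightarrow> nat \<Rightarrow> bool) \<Rightarrow> nat \<Rightarrow> bool" where
  "regular_graph n E r \<longleftrightarrow> (\<forall>v<n. card {u. u < n \<and> E v u} = r)"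

definition adjacency_matrix :: "nat \<Rightarrow> (nat \<Rightarrow> nat \<Rightarrow> bool) \<Rightarrow> real mat" where
  "adjacency_matrix n E = mat n n (\<lambda>(i, j). if E i j then 1 else 0)"

text \<open>The star K_{1,r} on vertex set {0..r}, with centre 0.\<close>
definition star_edge :: "nat \<Rightarrow> nat \<Rightarrow> bool" where
  "star_edge i j \<longleftrightarrow> (i = 0 \<and> j \<noteq> 0) \<or> (j = 0 \<and> i \<noteq> 0)"

definition component :: "(nat \<Rightarrow> nat \<Rightarrow> bool) \<Rightarrow> nat \<Rightarrow> nat set" where
  "component H v = {u. H\<^sup>*\<^sup>* v u}"

definition perfect_star_packing :: "nat \<Rightarrow> (nat \<Rightarrow> nat \<Rightarrow> bool) \<Rightarrow> nat \<Rightarrow> bool" where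
  "perfect_star_packing n E r \<longleftrightarrow>
     (\<exists>H. (\<forall>u v. H u v \<longrightarrow> E u v) \<and> (\<forall>u v. H u v \<longrightarrow> H v u) \<and>
          (\<forall>v<n. \<exists>f. bij_betw f (component H v) {0..r} \<and>
                 (\<forall>x\<in>component H v. \<forall>y\<in>component H v. H x y \<longleftrightarrow> star_edge (f x) (f y))))"

end

theory Submission
  imports Defs
begin

lemma rtranclp_sym_aux:
  assumes sym: "\<And>u v. H u v \<Longrightarrow> H v u" and "H\<^sup>*\<^sup>* a b"
  shows "H\<^sup>*\<^sup>* b a"
  using assms(2)
proof (induction rule: rtranclp_induct)
  case base then show ?case by simp
next
  case (step y z)
  then show ?case by (meson converse_rtranclp_into_rtranclp sym)
qed

theorem mainTheorem12:
  fixes n r :: nat and E :: "nat \<Rightarrow> nat \<Rightarrow> bool"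
  assumes "r \<ge> 1" and "n \<ge> 1"
    and "simple_graph n E"
    and "regular_graph n E r"
    and "perfect_star_packing n E r"
  shows "eigenvalue (adjacency_matrix n E) (-1)"
proof -
  obtain H where HE: "\<And>u v. H u v \<Longrightarrow> E u v" and Hsym: "\<And>u v. H u v \<Longrightarrow> H v u"
    and Hc: "\<And>v. v < n \<Longrightarrow> \<exists>f. bij_betw f (component H v) {0..r} \<and>
                 (\<forall>x\<in>component H v. \<forall>y\<in>component H v. H x y \<longleftrightarrow> star_edge (f x) (f y))"
    using assms(5) unfolding perfect_star_packing_def by blast
  have Ebd: "\<And>u v. E u v \<Longrightarrow> u < n \<and> v < n" and Esym: "\<And>u v. E u v \<Longrightarrow> E v u"
    using assms(3) unfolding simple_graph_def by blast+
  have deg: "\<And>v. v < n \<Longrightarrow> card {u. u < n \<and> E v u} = r"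
    using assms(4) unfolding regular_graph_def by blast
  define C where "C = component H"
  define P where "P = (\<lambda>S f. bij_betw f S {0..r} \<and>
                 (\<forall>x\<in>S. \<forall>y\<in>S. H x y \<longleftrightarrow> star_edge (f x) (f y)))"
  define g where "g = (\<lambda>S. SOME f. P S f)"
  have Pg: "P (C v) (g (C v))" if "v < n" for v
  proof -
    have "\<exists>f. P (C v) f" using Hc[OF that] unfolding P_def C_def .
    then show ?thesis unfolding g_def by (rule someI_ex)
  qed
  have self: "v \<in> C v" for v unfolding C_def component_def by simp
  have Cbd: "u < n" if "v < n" "u \<in> C v" for u v
  proof -
    have "H\<^sup>*\<^sup>* v u" using that unfolding C_def component_def by simp
    then show ?thesis
      by (induction rule: rtranclp_induct) (use that HE Ebd in blast)+
  qed
  have Ceq: "C u = C v" if "u \<in> C v" for u v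
  proof -
    have a: "H\<^sup>*\<^sup>* v u" using that unfolding C_def component_def by simp
    have b: "H\<^sup>*\<^sup>* u v" using rtranclp_sym_aux[OF Hsym a] .
    show ?thesis unfolding C_def component_def
      using a b by (auto intro: rtranclp_trans)
  qed
  have Hin: "u \<in> C v" if "H v u" for u v
    using that unfolding C_def component_def by simp
  have finC: "finite (C v)" if "v < n" for v
    by (rule finite_subset[of _ "{..<n}"]) (use Cbd that in auto)
  have cardC: "card (C v) = Suc r" if "v < n" for v
  proof -
    have "bij_betw (g (C v)) (C v) {0..r}" using Pg[OF that] unfolding P_def by blast
    then have "card (C v) = card {0..r}" by (rule bij_betw_same_card)
    then show ?thesis by simp
  qed
  have center: "{u. u < n \<and> E v u} = C v - {v}" if "v < n" "g (C v) v = 0" for v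
  proof -
    let ?f = "g (C v)"
    have bij: "bij_betw ?f (C v) {0..r}" and st: "\<forall>x\<in>C v. \<forall>y\<in>C v. H x y \<longleftrightarrow> star_edge (?f x) (?f y)"
      using Pg[OF that(1)] unfolding P_def by auto
    have sub: "C v - {v} \<subseteq> {u. u < n \<and> E v u}"
    proof
      fix u assume u: "u \<in> C v - {v}"
      have "?f u \<noteq> ?f v"
        using bij self[of v] u unfolding bij_betw_def inj_on_def by blast
      then have "?f u \<noteq> 0" using that(2) by simp
      then have "H v u" using st self[of v] u that(2) unfolding star_edge_def by auto
      then show "u \<in> {u. u < n \<and> E v u}" using HE Ebd by blast
    qed
    have "card (C v - {v}) = r" using cardC[OF that(1)] finC[OF that(1)] self[of v] by simp
    moreover have "finite {u. u < n \<and> E v u}" by simp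
    ultimately show ?thesis using sub deg[OF that(1)] card_subset_eq by metis
  qed
  define x where "x = (\<lambda>u. if g (C u) u = 0 then - real r else 1)"
  have key: "(\<Sum>u\<in>{u. u < n \<and> E v u}. x u) = - x v" if "v < n" for v
  proof (cases "g (C v) v = 0")
    case True
    have "(\<Sum>u\<in>{u. u < n \<and> E v u}. x u) = (\<Sum>u\<in>C v - {v}. x u)" using center[OF that True] by simp
    also have "\<dots> = (\<Sum>u\<in>C v - {v}. 1)"
    proof (rule sum.cong)
      fix u assume u: "u \<in> C v - {v}"
      have "C u = C v" using Ceq u by blast
      moreover have "g (C v) u \<noteq> g (C v) v" using Pg[OF that] u self[of v]
        unfolding P_def bij_betw_def inj_on_def by blast
      moreover have "g (C v) u \<noteq> 0" using calculation(2) True by simp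
      ultimately show "x u = 1" unfolding x_def by simp
    qed simp
    also have "\<dots> = real r" using cardC[OF that] finC[OF that] self[of v] by simp
    finally show ?thesis unfolding x_def using True by simp
  next
    case False
    let ?f = "g (C v)"
    have bij: "bij_betw ?f (C v) {0..r}" and st: "\<forall>x\<in>C v. \<forall>y\<in>C v. H x y \<longleftrightarrow> star_edge (?f x) (?f y)"
      using Pg[OF that] unfolding P_def by auto
    have "0 \<in> ?f ` C v" using bij unfolding bij_betw_def by simp
    then obtain c where c: "c \<in> C v" "?f c = 0" by force
    have "H v c" using st c self[of v] False unfolding star_edge_def by auto
    then have Evc: "E v c" using HE by blast
    have cn: "c < n" using Evc Ebd by blast
    have Cc: "C c = C v" using Ceq c(1) by blast
    define N where "N = {u. u < n \<and> E v u}"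
    have finN: "finite N" unfolding N_def by simp
    have cN: "c \<in> N" unfolding N_def using cn Evc by simp
    have xc: "x c = - real r" unfolding x_def using Cc c by simp
    have others: "x u = 1" if "u \<in> N - {c}" for u
    proof (rule ccontr)
      assume "x u \<noteq> 1"
      then have gu: "g (C u) u = 0" unfolding x_def by (auto split: if_splits)
      have un: "u < n" and Evu: "E v u" using that unfolding N_def by auto
      have "v \<in> {w. w < n \<and> E u w}" using Esym[OF Evu] \<open>v < n\<close> by simp
      then have "v \<in> C u" using center[OF un gu] by blast
      then have "C v = C u" using Ceq by blast
      then have "u \<in> C v" using self[of u] by simp
      moreover have "?f u = 0" using gu \<open>C v = C u\<close> by simp
      ultimately have "u = c" using bij c unfolding bij_betw_def inj_on_def by auto
      then show False using that by simp
    qed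
    have "(\<Sum>u\<in>N. x u) = x c + (\<Sum>u\<in>N - {c}. x u)"
      using finN cN by (simp add: sum.remove)
    also have "(\<Sum>u\<in>N - {c}. x u) = (\<Sum>u\<in>N - {c}. 1)" using others by (rule sum.cong[OF refl])
    also have "\<dots> = real (r - 1)" using finN cN deg[OF that] unfolding N_def by simp
    finally have "(\<Sum>u\<in>N. x u) = -1" using xc assms(1) by simp
    then show ?thesis unfolding N_def x_def using False by simp
  qed
  define w where "w = vec n x"
  have Adim: "dim_row (adjacency_matrix n E) = n" unfolding adjacency_matrix_def by simp
  have "adjacency_matrix n E *\<^sub>v w = (-1) \<cdot>\<^sub>v w"
  proof (rule eq_vecI)
    fix i assume i: "i < dim_vec ((-1) \<cdot>\<^sub>v w)"
    then have i': "i < n" unfolding w_def by simp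
    have "(adjacency_matrix n E *\<^sub>v w) $ i = (\<Sum>j<n. (if E i j then 1 else 0) * x j)"
      using i' unfolding adjacency_matrix_def w_def
      by (simp add: scalar_prod_def row_def lessThan_atLeast0)
    also have "\<dots> = (\<Sum>j\<in>{..<n}. if j \<in> {j. E i j} then x j else 0)"
      by (rule sum.cong) auto
    also have "\<dots> = sum x ({..<n} \<inter> {j. E i j})"
      by (rule sum.inter_restrict[symmetric]) simp
    also have "\<dots> = sum x {j. j < n \<and> E i j}"
      by (rule arg_cong[where f="sum x"]) auto
    also have "\<dots> = - x i" using key[OF i'] .
    finally show "(adjacency_matrix n E *\<^sub>v w) $ i = ((-1) \<cdot>\<^sub>v w) $ i"
      using i' unfolding w_def by simp
  qed (simp add: adjacency_matrix_def w_def)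
  moreover have "w \<noteq> 0\<^sub>v n"
  proof
    assume "w = 0\<^sub>v n"
    then have "w $ 0 = 0\<^sub>v n $ 0" by simp
    then have "x 0 = 0" using assms(2) unfolding w_def by simp
    then show False using assms(1) unfolding x_def by (auto split: if_splits)
  qed
  moreover have "w \<in> carrier_vec n" unfolding w_def by simp
  ultimately show ?thesis unfolding eigenvalue_def eigenvector_def Adim
    by blast
qed

end
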